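(* Let $T$ be the operator on $H^2$ given by $Tf=\sum_{m=0}^\infty\left(\sum_{n=0}^\infty n!\,\hat f(n+m)\right)z^m$, with domain $D(T)=\{f\in H^2: Tf\in H^2\}$ (i.e. those $f$ for which every inner series converges and the resulting coefficient sequence is square summable). Then $D(T)$ is not shift invariant: there exists $f\in D(T)$ with $zf\notin D(T)$.
   Context: $H^2$ is the Hardy space of analytic functions $f(z)=\sum_{n\ge0}\hat f(n)z^n$ on the unit disc with $\sum|\hat f(n)|^2<\infty$. *)

theory Defs
  imports "HOL-Analysis.Analysis"
begin

text \<open>Elements of H^2 are represented by their Taylor coefficient sequences
  f = (hat f(n))_n, with the square summability condition.\<close>

definition H2 :: "(nat \<Rightarrow> complex) set" where
  "H2 = {f. summable (\<lambda>n. (cmod (f n))\<^sup>2)}"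

definition T_coeff :: "(nat \<Rightarrow> complex) \<Rightarrow> nat \<Rightarrow> complex" where
  "T_coeff f m = (\<Sum>n. of_nat (fact n) * f (n + m))"

definition domT :: "(nat \<Rightarrow> complex) set" where
  "domT = {f \<in> H2. (\<forall>m. summable (\<lambda>n. of_nat (fact n) * f (n + m))) \<and> T_coeff f \<in> H2}"

definition mult_z :: "(nat \<Rightarrow> complex) \<Rightarrow> nat \<Rightarrow> complex" where
  "mult_z f n = (if n = 0 then 0 else f (n - 1))"

end

theory Submission
  imports Defs
begin

definition aa :: "nat \<Rightarrow> real" where
  "aa n = (if n \<in> range (\<lambda>j::nat. (2::nat) ^ j) then 1 / real n else 0)"

definition ff :: "nat \<Rightarrow> complex" where
  "ff n = complex_of_real (aa n / fact n)"

lemma aa_nonneg: "aa n \<ge> 0"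
  by (simp add: aa_def)

lemma aa_le1: "aa n \<le> 1"
  by (auto simp: aa_def)

lemma aa_pow: "aa (2^j) = 1 / 2^j"
  by (auto simp: aa_def)

lemma aa_summable: "summable aa"
proof -
  have sm: "strict_mono (\<lambda>j::nat. (2::nat) ^ j)"
    by (rule strict_monoI) simp
  have "summable (\<lambda>j. aa (2^j))"
    using summable_geometric[of "1/2::real"] by (simp add: aa_pow power_one_over)
  thus ?thesis
    using summable_mono_reindex[OF sm, of aa] by (simp add: aa_def)
qed

lemma aux: "0<r \<Longrightarrow> 0<F \<Longrightarrow> r*x \<le> F \<Longrightarrow> x/F \<le> 1/(r::real)"
  by (simp add: field_simps)

lemma fact_ratio: "fact n / fact (n + m) \<le> (2::real) / (real m + 1)"
proof (cases m)
  case 0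
  then show ?thesis by simp
next
  case (Suc k)
  have "fact (n + m) = real (n + m) * fact (n + k)"
    using Suc by (simp add: fact_Suc)
  moreover have "(fact n :: real) \<le> fact (n + k)" by (rule fact_mono) simp
  ultimately have "real (n+m) * fact n \<le> fact (n+m)"
    by (simp add: mult_left_mono)
  hence "fact n / fact (n+m) \<le> 1 / real (n+m)"
    using Suc aux[of "real (n+m)" "fact (n+m)" "fact n"] by simp
  also have "\<dots> \<le> 1 / real m" using Suc by (simp add: frac_le)
  also have "\<dots> \<le> 2 / (real m + 1)" using Suc by (simp add: field_simps)
  finally show ?thesis .
qed

lemma term_bound: "norm (of_nat (fact n) * ff (n + m)) \<le> aa (n+m) * (2 / (real m + 1))"
proof -
  have "of_nat (fact n) * ff (n + m) = complex_of_real (aa (n+m) * (fact n / fact (n+m)))"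
    by (simp add: ff_def)
  hence "norm (of_nat (fact n) * ff (n + m)) = aa (n+m) * (fact n / fact (n+m))"
    by (simp only: norm_of_real abs_of_nonneg aa_nonneg) (simp add: aa_nonneg)
  also have "\<dots> \<le> aa (n+m) * (2 / (real m + 1))"
    by (rule mult_left_mono[OF fact_ratio aa_nonneg])
  finally show ?thesis .
qed

lemma aa_shift_summable: "summable (\<lambda>n. aa (n+m))"
  using summable_ignore_initial_segment[OF aa_summable, of m] by simp

lemma series_summable: "summable (\<lambda>n. norm (of_nat (fact n) * ff (n + m)))"
  by (rule summable_comparison_test[where g="\<lambda>n. aa(n+m) * (2/(real m+1))"])
     (use term_bound summable_mult2[OF aa_shift_summable] in auto)

lemma T_bound: "cmod (T_coeff ff m) \<le> suminf aa * (2 / (real m + 1))"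
proof -
  have "cmod (T_coeff ff m) \<le> (\<Sum>n. norm (of_nat (fact n) * ff (n + m)))"
    unfolding T_coeff_def by (rule summable_norm[OF series_summable])
  also have "\<dots> \<le> (\<Sum>n. aa (n+m) * (2 / (real m + 1)))"
    by (rule suminf_le[OF term_bound series_summable summable_mult2[OF aa_shift_summable]])
  also have "\<dots> = (\<Sum>n. aa (n+m)) * (2 / (real m + 1))"
    by (rule suminf_mult2[OF aa_shift_summable, symmetric])
  also have "(\<Sum>n. aa (n+m)) \<le> suminf aa"
    using suminf_split_initial_segment[OF aa_summable, of m] sum_nonneg[of "{..<m}" aa] aa_nonneg
    by simp
  hence "(\<Sum>n. aa (n+m)) * (2 / (real m + 1)) \<le> suminf aa * (2 / (real m + 1))"
    by (intro mult_right_mono) auto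
  finally show ?thesis .
qed

lemma ff_domT: "ff \<in> domT"
proof -
  have H: "ff \<in> H2"
    unfolding H2_def mem_Collect_eq
  proof (rule summable_comparison_test[OF _ aa_summable], intro exI allI impI)
    fix n :: nat
    have "0 \<le> aa n / fact n" by (simp add: aa_nonneg)
    moreover have "aa n / fact n \<le> aa n"
      using aa_nonneg[of n] by (simp add: divide_le_eq fact_ge_1 mult_le_cancel_left1) 
    moreover have "aa n / fact n \<le> 1" using aa_le1[of n] \<open>aa n / fact n \<le> aa n\<close> by linarith
    ultimately have "(aa n / fact n)^2 \<le> aa n"
      by (metis dual_order.trans mult_left_le power2_eq_square)
    moreover have "cmod (ff n) = aa n / fact n"
      unfolding ff_def norm_of_real using aa_nonneg[of n] by simp
    ultimately show "norm ((cmod (ff n))\<^sup>2) \<le> aa n"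
      by simp
  qed
  have S: "\<forall>m. summable (\<lambda>n. of_nat (fact n) * ff (n + m))"
    by (intro allI summable_norm_cancel[OF series_summable])
  have sq: "summable (\<lambda>m. (suminf aa * 2)^2 * inverse (real (Suc m) ^ 2))"
    by (rule summable_mult, subst summable_Suc_iff, rule inverse_power_summable) simp
  have "T_coeff ff \<in> H2"
    unfolding H2_def mem_Collect_eq
  proof (rule summable_comparison_test[OF _ sq], intro exI allI impI)
    fix m :: nat
    have "(cmod (T_coeff ff m))^2 \<le> (suminf aa * (2 / (real m + 1)))^2"
      by (rule power_mono[OF T_bound]) simp
    moreover have "(suminf aa * (2 / (real m + 1)))^2 = (suminf aa * 2)^2 * inverse (real (Suc m) ^ 2)"
      by (simp add: power_mult_distrib divide_inverse power_inverse)
    ultimately show "norm ((cmod (T_coeff ff m))\<^sup>2) \<le> (suminf aa * 2)^2 * inverse (real (Suc m) ^ 2)"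
      by simp
  qed
  show ?thesis using H S \<open>T_coeff ff \<in> H2\<close> by (simp add: domT_def)
qed

lemma shift_not: "mult_z ff \<notin> domT"
proof
  assume "mult_z ff \<in> domT"
  hence "\<forall>m. summable (\<lambda>n. of_nat (fact n) * mult_z ff (n + m))"
    by (simp add: domT_def)
  hence "summable (\<lambda>n. of_nat (fact n) * mult_z ff (n + 0))" by blast
  hence "(\<lambda>n. of_nat (fact n) * mult_z ff n) \<longlonglongrightarrow> 0"
    by (simp add: summable_LIMSEQ_zero)
  then obtain N where N: "\<And>n. n \<ge> N \<Longrightarrow> norm (of_nat (fact n) * mult_z ff n) < 1"
    using LIMSEQ_D[of _ 0 1] by fastforce
  have "N \<le> 2^N + 1"
    using less_exp[of N] by linarith
  from N[OF this] have "norm (of_nat (fact (2^N+1)) * ff (2^N)) < 1"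
    by (simp add: mult_z_def)
  moreover have "of_nat (fact (2^N+1)) * ff (2^N) = complex_of_real ((2^N + 1) / 2^N)"
    by (simp add: ff_def aa_pow fact_Suc field_simps)
  hence "norm (of_nat (fact (2^N+1)) * ff (2^N)) = (2^N + 1) / 2^N"
    by (simp only: norm_of_real) simp
  moreover have "(2^N + 1) / (2^N::real) \<ge> 1" by simp
  ultimately show False by linarith
qed

theorem corollary2:
  shows "\<exists>f \<in> domT. mult_z f \<notin> domT"
  using ff_domT shift_not by blast

end
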